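(* For every positive integer $d$ and every $\epsilon\in(0,1)$ there exist $n_0$ and, for each $n\ge n_0$, a family $\mathcal{C}_n$ of subsets of $[n]^d$ such that: (i) every sum-free subset of $[n]^d$ is contained in some member of $\mathcal{C}_n$; (ii) every member of $\mathcal{C}_n$ contains at most $\epsilon n^{2d}$ Schur triples; (iii) $\log_2|\mathcal{C}_n|=o(n^d)$ as $n\to\infty$.
   Context: $[n]=\{1,\dots,n\}$, $[n]^d\subset\mathbb{Z}^d$ with coordinatewise addition. A set is sum-free if there are no $a,b,c$ in it (not necessarily distinct) with $a+b=c$. A Schur triple in a set $A$ is a set $\{a,b,c\}\subseteq A$ of three distinct elements with $a+b=c$. *)

theory Defs
  imports Complex_Main "HOL-Library.Landau_Symbols"
begin

definition grid :: "nat \<Rightarrow> nat \<Rightarrow> int list set" where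
  "grid n d = {x. length x = d \<and> set x \<subseteq> {1..int n}}"

definition vadd :: "int list \<Rightarrow> int list \<Rightarrow> int list" where
  "vadd x y = map2 (+) x y"

definition sum_free :: "int list set \<Rightarrow> bool" where
  "sum_free A \<longleftrightarrow> (\<forall>a\<in>A. \<forall>b\<in>A. \<forall>c\<in>A. vadd a b \<noteq> c)"

definition schur_triples :: "int list set \<Rightarrow> int list set set" where
  "schur_triples A = {T. \<exists>a b c. T = {a, b, c} \<and> T \<subseteq> A \<and> card T = 3 \<and> vadd a b = c}"

end

theory Submission
  imports Defs "HOL-Real_Asymp.Real_Asymp"
begin


lemma vadd_cancel_r:
  "length x = length y \<Longrightarrow> length x = length z \<Longrightarrow> vadd x y = vadd x z \<Longrightarrow> y = z"
proof (induction x arbitrary: y z)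
  case Nil then show ?case by simp
next
  case (Cons a x)
  then obtain b y' c z' where "y = b # y'" "z = c # z'"
    by (metis length_Suc_conv)
  with Cons show ?case by (auto simp: vadd_def)
qed

lemma vadd_cancel_l:
  "length x = length y \<Longrightarrow> length z = length y \<Longrightarrow> vadd x y = vadd z y \<Longrightarrow> x = z"
proof (induction y arbitrary: x z)
  case Nil then show ?case by simp
next
  case (Cons a y)
  then obtain b x' c z' where "x = b # x'" "z = c # z'"
    by (metis length_Suc_conv)
  with Cons show ?case by (auto simp: vadd_def)
qed

lemma finite_grid: "finite (grid n d)"
proof -
  have "grid n d = {xs. set xs \<subseteq> {1..int n} \<and> length xs = d}" by (auto simp: grid_def)
  then show ?thesis by (simp add: finite_lists_length_eq)
qed

lemma card_grid: "card (grid n d) = n ^ d"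
proof -
  have "grid n d = {xs. set xs \<subseteq> {1..int n} \<and> length xs = d}" by (auto simp: grid_def)
  then show ?thesis by (simp add: card_lists_length_eq)
qed

lemma grid_len: "x \<in> grid n d \<Longrightarrow> length x = d" by (simp add: grid_def)

primrec fam :: "('s set \<Rightarrow> bool) \<Rightarrow> ('s set \<Rightarrow> 's set set) \<Rightarrow> 's set \<Rightarrow> nat \<Rightarrow> 's set set" where
  "fam g st G 0 = {G}"
| "fam g st G (Suc k) = (\<Union>B\<in>fam g st G k. if g B then {B} else st B)"

lemma fam_SucE:
  assumes "B \<in> fam g st G (Suc k)"
  obtains B0 where "B0 \<in> fam g st G k" "g B0" "B = B0"
    | B0 where "B0 \<in> fam g st G k" "\<not> g B0" "B \<in> st B0"
  using assms by (auto split: if_splits)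

lemma fam_SucI1: "B \<in> fam g st G k \<Longrightarrow> g B \<Longrightarrow> B \<in> fam g st G (Suc k)"
  by auto

lemma fam_SucI2: "B0 \<in> fam g st G k \<Longrightarrow> \<not> g B0 \<Longrightarrow> B \<in> st B0 \<Longrightarrow> B \<in> fam g st G (Suc k)"
  by auto


lemma fam_sub:
  assumes "\<And>B B'. B \<subseteq> G \<Longrightarrow> B' \<in> st B \<Longrightarrow> B' \<subseteq> B"
  shows "B \<in> fam g st G k \<Longrightarrow> B \<subseteq> G"
proof (induction k arbitrary: B)
  case 0 then show ?case by simp
next
  case (Suc k)
  from Suc.prems show ?case
  proof (cases rule: fam_SucE)
    case (1 B0) then show ?thesis using Suc.IH[of B0] by simp
  next
    case (2 B0)
    then have "B0 \<subseteq> G" using Suc.IH by blast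
    have "B \<subseteq> B0" using assms(1)[OF \<open>B0 \<subseteq> G\<close> 2(3)] .
    then show ?thesis using \<open>B0 \<subseteq> G\<close> by (rule order_trans)
  qed
qed

lemma fam_cover:
  assumes sub: "\<And>B B'. B \<subseteq> G \<Longrightarrow> B' \<in> st B \<Longrightarrow> B' \<subseteq> B"
    and cov: "\<And>B A. B \<subseteq> G \<Longrightarrow> A \<subseteq> B \<Longrightarrow> Q A \<Longrightarrow> \<not> g B \<Longrightarrow> \<exists>B'\<in>st B. A \<subseteq> B'"
    and AG: "A \<subseteq> G" and QA: "Q A"
  shows "\<exists>B\<in>fam g st G k. A \<subseteq> B"
proof (induction k)
  case 0 show ?case using AG by simp
next
  case (Suc k)
  from Suc.IH obtain B where B1: "B \<in> fam g st G k" and B2: "A \<subseteq> B" by (rule bexE)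
  have BG: "B \<subseteq> G" using fam_sub[OF sub B1] .
  show ?case
  proof (cases "g B")
    case True
    have "B \<in> fam g st G (Suc k)" using fam_SucI1[OF B1 True] .
    then show ?thesis using B2 by (rule bexI[rotated])
  next
    case False
    obtain B' where B': "B' \<in> st B" "A \<subseteq> B'" using cov[OF BG B2 QA False] by (rule bexE)
    have "B' \<in> fam g st G (Suc k)" using fam_SucI2[OF B1 False B'(1)] .
    then show ?thesis using B'(2) by (rule bexI[rotated])
  qed
qed

lemma fam_shrink:
  assumes "\<And>B B'. B \<subseteq> G \<Longrightarrow> B' \<in> st B \<Longrightarrow> B' \<subseteq> B"
    and "\<And>B B'. B \<subseteq> G \<Longrightarrow> \<not> g B \<Longrightarrow> B' \<in> st B \<Longrightarrow> real (card B') + \<delta> \<le> real (card B)"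
  shows "B \<in> fam g st G k \<Longrightarrow> g B \<or> real (card B) + real k * \<delta> \<le> real (card G)"
proof (induction k arbitrary: B)
  case 0 then show ?case by simp
next
  case (Suc k)
  from Suc.prems show ?case
  proof (cases rule: fam_SucE)
    case (1 B0) then show ?thesis by simp
  next
    case (2 B0)
    have BG: "B0 \<subseteq> G" using fam_sub[OF assms(1) 2(1)] .
    have "real (card B) + \<delta> \<le> real (card B0)" using assms(2)[OF BG 2(2) 2(3)] .
    moreover have "real (card B0) + real k * \<delta> \<le> real (card G)" using Suc.IH[OF 2(1)] 2(2) by simp
    ultimately show ?thesis by (simp add: algebra_simps)
  qed
qed

lemma fam_card:
  assumes "\<And>B B'. B \<subseteq> G \<Longrightarrow> B' \<in> st B \<Longrightarrow> B' \<subseteq> B"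
    and "\<And>B. B \<subseteq> G \<Longrightarrow> finite (st B) \<and> card (st B) \<le> M" and "M \<ge> 1"
  shows "finite (fam g st G k) \<and> card (fam g st G k) \<le> M ^ k"
proof (induction k)
  case 0 then show ?case by simp
next
  case (Suc k)
  let ?F = "fam g st G k"
  have fin: "finite ?F" using Suc by simp
  have each: "finite (if g B then {B} else st B) \<and> card (if g B then {B} else st B) \<le> M"
    if "B \<in> ?F" for B
  proof -
    have "B \<subseteq> G" using fam_sub[OF assms(1) that] .
    then show ?thesis using assms(2)[of B] assms(3) by (cases "g B") auto
  qed
  have "card (fam g st G (Suc k)) \<le> (\<Sum>B\<in>?F. card (if g B then {B} else st B))"
    unfolding fam.simps by (rule card_UN_le[OF fin])
  also have "\<dots> \<le> (\<Sum>B\<in>?F. M)" by (rule sum_mono) (use each in blast)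
  also have "\<dots> = card ?F * M" by simp
  also have "\<dots> \<le> M ^ k * M" using Suc by simp
  finally have "card (fam g st G (Suc k)) \<le> M ^ Suc k" by (simp add: mult.commute)
  moreover have "finite (fam g st G (Suc k))" unfolding fam.simps using fin each by blast
  ultimately show ?case by simp
qed

lemma graph_container_aux:
  fixes nbr :: "'a \<Rightarrow> 'a set" and D :: real
  assumes fV: "finite V" and nV: "\<And>v. nbr v \<subseteq> V" and D: "D > 0" and fI: "finite I"
  shows "T \<subseteq> I \<Longrightarrow> real (card T) * D \<le> real (card (\<Union>(nbr ` T))) \<Longrightarrow>
     \<exists>T'. T' \<subseteq> I \<and> real (card T') * D \<le> real (card (\<Union>(nbr ` T'))) \<and>
          (\<forall>v\<in>I. real (card (nbr v - \<Union>(nbr ` T'))) < D)"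
proof (induction "card V - card (\<Union>(nbr ` T))" arbitrary: T rule: less_induct)
  case less
  show ?case
  proof (cases "\<forall>v\<in>I. real (card (nbr v - \<Union>(nbr ` T))) < D")
    case True then show ?thesis using less.prems by blast
  next
    case False
    then obtain v where v: "v \<in> I" "real (card (nbr v - \<Union>(nbr ` T))) \<ge> D" by (auto simp: not_less)
    let ?U = "\<Union>(nbr ` T)"
    have fU: "finite ?U" by (rule finite_subset[OF _ fV]) (use nV in auto)
    have fN: "finite (nbr v)" using nV fV finite_subset by blast
    have vT: "v \<notin> T"
    proof
      assume "v \<in> T"
      then have "nbr v - ?U = {}" by auto
      with v D show False by simp
    qed
    have UT': "\<Union>(nbr ` insert v T) = ?U \<union> (nbr v - ?U)" by auto
    have cardU': "card (\<Union>(nbr ` insert v T)) = card ?U + card (nbr v - ?U)"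
      unfolding UT' by (rule card_Un_disjoint) (use fU fN in auto)
    have fT: "finite T" using fI less.prems(1) finite_subset by blast
    have sub: "\<Union>(nbr ` insert v T) \<subseteq> V" using nV by auto
    have le: "card (\<Union>(nbr ` insert v T)) \<le> card V" using card_mono[OF fV sub] .
    have pos: "card (nbr v - ?U) > 0" using v D by (metis gr0I of_nat_0 not_less)
    have "card V - card (\<Union>(nbr ` insert v T)) < card V - card ?U"
      using le cardU' pos by linarith
    moreover have "insert v T \<subseteq> I" using less.prems v by auto
    moreover have "real (card (insert v T)) * D \<le> real (card (\<Union>(nbr ` insert v T)))"
      using less.prems(2) v cardU' vT fT by (simp add: algebra_simps)
    ultimately show ?thesis using less.hyps by blast
  qed
qed

lemma graph_container:
  fixes nbr :: "'a \<Rightarrow> 'a set" and D :: real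
  assumes fV: "finite V" and nV: "\<And>v. nbr v \<subseteq> V" and D: "D > 0" and fI: "finite I"
  shows "\<exists>T. T \<subseteq> I \<and> real (card T) * D \<le> real (card V) \<and>
          (\<forall>v\<in>I. real (card (nbr v - \<Union>(nbr ` T))) < D)"
proof -
  obtain T where T: "T \<subseteq> I" "real (card T) * D \<le> real (card (\<Union>(nbr ` T)))"
          "\<forall>v\<in>I. real (card (nbr v - \<Union>(nbr ` T))) < D"
    using graph_container_aux[where V=V and nbr=nbr and D=D and I=I and T="{}", OF fV nV D fI] by auto
  have "card (\<Union>(nbr ` T)) \<le> card V" using nV fV by (intro card_mono) auto
  then show ?thesis using T by (intro exI[of _ T]) auto
qed




definition PP :: "int list set \<Rightarrow> (int list \<times> int list) set" where
  "PP B = {(a,b). a \<in> B \<and> b \<in> B \<and> vadd a b \<in> B}"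
definition dg :: "int list set \<Rightarrow> int list \<Rightarrow> nat" where
  "dg B v = card {b \<in> B. vadd v b \<in> B}"
definition Xs :: "real \<Rightarrow> int list set \<Rightarrow> int list set" where
  "Xs th B = {v \<in> B. th \<le> real (dg B v)}"
definition Ed :: "int list set \<Rightarrow> int list set \<Rightarrow> (int list \<times> int list) set" where
  "Ed B T = {(b, vadd t b) | t b. t \<in> T \<and> b \<in> B \<and> vadd t b \<in> B}"
definition nb :: "int list set \<Rightarrow> int list set \<Rightarrow> int list \<Rightarrow> int list set" where
  "nb B T v = {y. (v,y) \<in> Ed B T \<or> (y,v) \<in> Ed B T}"
definition NU :: "int list set \<Rightarrow> int list set \<Rightarrow> int list set \<Rightarrow> int list set" where
  "NU B T T2 = \<Union>(nb B T ` T2)"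
definition Cont :: "nat \<Rightarrow> real \<Rightarrow> real \<Rightarrow> int list set \<Rightarrow> int list set \<Rightarrow> int list set \<Rightarrow> int list set" where
  "Cont q th D B T1 T2 = (if card T1 < q then (B - Xs th B) \<union> T1
     else T2 \<union> {v \<in> B - NU B T1 T2. real (card (nb B T1 v - NU B T1 T2)) < D})"

lemma PP_sub: "PP B \<subseteq> B \<times> B" by (auto simp: PP_def)

lemma schur_le_PP:
  assumes "finite B"
  shows "card (schur_triples B) \<le> card (PP B)"
proof -
  have "schur_triples B \<subseteq> (\<lambda>(a,b). {a, b, vadd a b}) ` PP B"
  proof
    fix T assume "T \<in> schur_triples B"
    then obtain a b c where "T = {a,b,c}" "T \<subseteq> B" "vadd a b = c"
      by (auto simp: schur_triples_def)
    then show "T \<in> (\<lambda>(a,b). {a, b, vadd a b}) ` PP B"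
      by (auto simp: PP_def intro!: image_eqI[of _ _ "(a,b)"])
  qed
  moreover have "finite (PP B)" using PP_sub assms by (meson finite_SigmaI finite_subset)
  ultimately show ?thesis by (meson card_image_le card_mono finite_imageI order_trans)
qed

lemma card_PP:
  assumes "finite B"
  shows "card (PP B) = (\<Sum>v\<in>B. dg B v)"
proof -
  have "PP B = Sigma B (\<lambda>a. {b \<in> B. vadd a b \<in> B})" by (auto simp: PP_def)
  then show ?thesis using assms by (simp add: dg_def)
qed

lemma dg_le: "finite B \<Longrightarrow> dg B v \<le> card B"
  unfolding dg_def by (intro card_mono) auto

lemma Xs_sub: "Xs th B \<subseteq> B" by (auto simp: Xs_def)

lemma Xs_big:
  fixes \<epsilon> N :: real
  assumes fB: "finite B" and BN: "real (card B) \<le> N" and eps: "\<epsilon> > 0"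
    and big: "\<epsilon> * N^2 < real (card (PP B))"
  shows "\<epsilon> * N / 2 < real (card (Xs (\<epsilon> * N / 2) B))"
proof -
  let ?th = "\<epsilon> * N / 2"
  let ?X = "Xs ?th B"
  have N0: "N \<ge> 0" using BN by linarith
  have XB: "?X \<subseteq> B" by (rule Xs_sub)
  have fX: "finite ?X" using XB fB finite_subset by blast
  have "real (card (PP B)) = (\<Sum>v\<in>B. real (dg B v))" using card_PP[OF fB] by simp
  also have "\<dots> = (\<Sum>v\<in>?X. real (dg B v)) + (\<Sum>v\<in>B - ?X. real (dg B v))"
    using sum.subset_diff[OF XB fB, of "\<lambda>v. real (dg B v)"] by (simp add: add.commute)
  also have "(\<Sum>v\<in>?X. real (dg B v)) \<le> (\<Sum>v\<in>?X. N)"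
  proof (rule sum_mono)
    fix v
    have "dg B v \<le> card B" by (rule dg_le[OF fB])
    then have "real (dg B v) \<le> real (card B)" by simp
    then show "real (dg B v) \<le> N" using BN by linarith
  qed
  also have "(\<Sum>v\<in>B - ?X. real (dg B v)) \<le> (\<Sum>v\<in>B - ?X. ?th)"
    by (rule sum_mono) (auto simp: Xs_def)
  finally have "real (card (PP B)) \<le> real (card ?X) * N + real (card (B - ?X)) * ?th" by simp
  also have "real (card (B - ?X)) * ?th \<le> N * ?th"
    using card_mono[OF fB, of "B - ?X"] BN eps N0
    by (intro mult_right_mono) (auto simp: order_trans)
  finally have "\<epsilon> * N^2 < real (card ?X) * N + N * ?th" using big by linarith
  then have "\<epsilon> * N^2 / 2 < real (card ?X) * N" by (simp add: power2_eq_square field_simps)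
  moreover have "N > 0"
  proof (rule ccontr)
    assume "\<not> N > 0"
    then have "N = 0" using N0 by simp
    with \<open>\<epsilon> * N^2 / 2 < real (card ?X) * N\<close> show False by simp
  qed
  ultimately show ?thesis by (simp add: power2_eq_square field_simps)
qed


lemma Ed_sub: "Ed B T \<subseteq> B \<times> B" by (auto simp: Ed_def)

lemma card_Ed:
  assumes BG: "B \<subseteq> grid n d" and TB: "T \<subseteq> B"
  shows "card (Ed B T) = (\<Sum>t\<in>T. dg B t)"
proof -
  have fB: "finite B" using BG finite_grid finite_subset by blast
  have fT: "finite T" using TB fB finite_subset by blast
  let ?S = "Sigma T (\<lambda>t. {b \<in> B. vadd t b \<in> B})"
  have eq: "Ed B T = (\<lambda>(t,b). (b, vadd t b)) ` ?S" by (auto simp: Ed_def)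
  have inj: "inj_on (\<lambda>(t,b). (b, vadd t b)) ?S"
  proof (rule inj_onI)
    fix p p' assume A: "p \<in> ?S" "p' \<in> ?S"
      and E: "(\<lambda>(t,b). (b, vadd t b)) p = (\<lambda>(t,b). (b, vadd t b)) p'"
    obtain t b where p: "p = (t,b)" by fastforce
    obtain t' b' where p': "p' = (t',b')" by fastforce
    have tT: "t \<in> T" "b \<in> B" "t' \<in> T" using A p p' by auto
    have "b = b'" "vadd t b = vadd t' b" using E p p' by auto
    moreover have "length t = length b" "length t' = length b"
      using tT TB BG grid_len by (metis subsetD)+
    ultimately have "t = t'" using vadd_cancel_l by blast
    then show "p = p'" using p p' \<open>b = b'\<close> by simp
  qed
  have "card (Ed B T) = card ?S" unfolding eq by (rule card_image[OF inj])
  also have "\<dots> = (\<Sum>t\<in>T. dg B t)" using fT fB by (simp add: dg_def)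
  finally show ?thesis .
qed

lemma outdeg:
  assumes fT: "finite T"
  shows "card {y. (x,y) \<in> Ed B T} \<le> card T"
proof -
  have "{y. (x,y) \<in> Ed B T} \<subseteq> (\<lambda>t. vadd t x) ` T" by (auto simp: Ed_def)
  then show ?thesis by (meson card_image_le card_mono fT finite_imageI order_trans)
qed

lemma indeg:
  assumes BG: "B \<subseteq> grid n d" and TB: "T \<subseteq> B"
  shows "card {x. (x,y) \<in> Ed B T} \<le> card T"
proof -
  have fB: "finite B" using BG finite_grid finite_subset by blast
  have fT: "finite T" using TB fB finite_subset by blast
  have "{x. (x,y) \<in> Ed B T} \<subseteq> (\<lambda>t. THE b. b \<in> B \<and> vadd t b = y) ` T"
  proof
    fix x assume "x \<in> {x. (x,y) \<in> Ed B T}"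
    then obtain t where t: "t \<in> T" "x \<in> B" "vadd t x = y" by (auto simp: Ed_def)
    have "(THE b. b \<in> B \<and> vadd t b = y) = x"
    proof (rule the_equality)
      show "x \<in> B \<and> vadd t x = y" using t by simp
    next
      fix b assume b: "b \<in> B \<and> vadd t b = y"
      have "length t = d" "length b = d" "length x = d"
        using t b TB BG grid_len by (metis subsetD)+
      then show "b = x" using vadd_cancel_r[of t b x] b t by simp
    qed
    then show "x \<in> (\<lambda>t. THE b. b \<in> B \<and> vadd t b = y) ` T" using t(1) by force
  qed
  then show ?thesis by (meson card_image_le card_mono fT finite_imageI order_trans)
qed




lemma nb_sub: "nb B T v \<subseteq> B" using Ed_sub by (auto simp: nb_def)

lemma cover:
  assumes BG: "B \<subseteq> grid n d" and AB: "A \<subseteq> B" and sf: "sum_free A" and q0: "q > 0" and D0: "D > 0"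
    and mD: "\<And>k::nat. real k * D \<le> real (card B) \<Longrightarrow> k \<le> m"
  shows "\<exists>T1 T2. T1 \<subseteq> Xs th B \<and> card T1 \<le> q \<and> T2 \<subseteq> B \<and> card T2 \<le> m \<and> A \<subseteq> Cont q th D B T1 T2"
proof (cases "card (A \<inter> Xs th B) < q")
  case True
  have "A \<subseteq> Cont q th D B (A \<inter> Xs th B) {}" using True AB by (auto simp: Cont_def)
  then show ?thesis using True by (intro exI[of _ "A \<inter> Xs th B"] exI[of _ "{}"]) auto
next
  case False
  obtain T1 where T1: "T1 \<subseteq> A \<inter> Xs th B" "card T1 = q"
    using obtain_subset_with_card_n[of q "A \<inter> Xs th B"] False by (metis not_less)
  have fB: "finite B" using BG finite_grid finite_subset by blast
  have fA: "finite A" using AB fB finite_subset by blast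
  have indep: "nb B T1 x \<inter> A = {}" if xA: "x \<in> A" for x
  proof (rule ccontr)
    assume "nb B T1 x \<inter> A \<noteq> {}"
    then obtain y where y: "y \<in> A" "(x,y) \<in> Ed B T1 \<or> (y,x) \<in> Ed B T1" by (auto simp: nb_def)
    from y(2) show False
    proof
      assume "(x,y) \<in> Ed B T1"
      then obtain t where "t \<in> T1" "y = vadd t x" by (auto simp: Ed_def)
      then show False using sf xA y(1) T1(1) by (auto simp: sum_free_def)
    next
      assume "(y,x) \<in> Ed B T1"
      then obtain t where "t \<in> T1" "x = vadd t y" by (auto simp: Ed_def)
      then show False using sf xA y(1) T1(1) by (auto simp: sum_free_def)
    qed
  qed
  obtain T2 where T2: "T2 \<subseteq> A" "real (card T2) * D \<le> real (card B)"
     "\<forall>v\<in>A. real (card (nb B T1 v - \<Union>(nb B T1 ` T2))) < D"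
    using graph_container[where V=B and nbr="nb B T1" and D=D and I=A, OF fB nb_sub D0 fA] by blast
  have "card T2 \<le> m" using mD[OF T2(2)] .
  moreover have "A \<subseteq> Cont q th D B T1 T2"
  proof
    fix v assume vA: "v \<in> A"
    have "v \<notin> NU B T1 T2"
    proof
      assume "v \<in> NU B T1 T2"
      then obtain t where "t \<in> T2" "v \<in> nb B T1 t" by (auto simp: NU_def)
      then show False using indep[of t] T2(1) vA by blast
    qed
    moreover have "real (card (nb B T1 v - NU B T1 T2)) < D" using T2(3) vA by (simp add: NU_def)
    ultimately show "v \<in> Cont q th D B T1 T2" using vA AB T1(2) by (auto simp: Cont_def)
  qed
  ultimately show ?thesis using T1 T2(1) AB by (intro exI[of _ T1] exI[of _ T2]) auto
qed




lemma Cont_sub: "T1 \<subseteq> B \<Longrightarrow> T2 \<subseteq> B \<Longrightarrow> Cont q th D B T1 T2 \<subseteq> B"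
  by (auto simp: Cont_def)

lemma shrink:
  fixes \<epsilon> N :: real and q m :: nat
  assumes BG: "B \<subseteq> grid n d" and N: "N = real (card (grid n d))" and eps: "\<epsilon> > 0"
    and big: "\<epsilon> * N^2 < real (card (PP B))"
    and q0: "q > 0" and qup: "real q \<le> 3*\<epsilon>*N/8" and qlo: "128/\<epsilon>^2 \<le> real q"
    and mD: "real m \<le> N / (real q * \<epsilon> / 8)"
    and T1: "T1 \<subseteq> Xs (\<epsilon>*N/2) B" "card T1 \<le> q" and T2: "T2 \<subseteq> B" "card T2 \<le> m"
  shows "real (card (Cont q (\<epsilon>*N/2) (real q*\<epsilon>/8) B T1 T2)) + \<epsilon>*N/8 \<le> real (card B)"
proof -
  define th where "th = \<epsilon>*N/2"
  define D where "D = real q*\<epsilon>/8"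
  have fG: "finite (grid n d)" by (rule finite_grid)
  have fB: "finite B" using BG fG finite_subset by blast
  have BN: "real (card B) \<le> N" using card_mono[OF fG BG] N by simp
  have N0: "N \<ge> 0" using N by simp
  have Xbig: "th < real (card (Xs th B))" unfolding th_def by (rule Xs_big[OF fB BN eps big])
  have XB: "Xs th B \<subseteq> B" by (rule Xs_sub)
  have fX: "finite (Xs th B)" using XB fB finite_subset by blast
  have T1B: "T1 \<subseteq> B" using T1(1) XB unfolding th_def by blast
  have fT1: "finite T1" using T1B fB finite_subset by blast
  have D0: "D > 0" unfolding D_def using q0 eps by simp
  show ?thesis
  proof (cases "card T1 < q")
    case True
    have C: "Cont q th D B T1 T2 = (B - Xs th B) \<union> T1" using True by (simp add: Cont_def)
    have "card ((B - Xs th B) \<union> T1) \<le> card (B - Xs th B) + card T1" by (rule card_Un_le)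
    moreover have "card (B - Xs th B) = card B - card (Xs th B)" using card_Diff_subset[OF fX XB] .
    moreover have "card (Xs th B) \<le> card B" using card_mono[OF fB XB] .
    ultimately have "real (card (Cont q th D B T1 T2)) \<le> real (card B) - real (card (Xs th B)) + real (card T1)"
      unfolding C by linarith
    moreover have "real (card T1) \<le> real q" using T1(2) by simp
    ultimately show ?thesis using Xbig qup unfolding th_def D_def by linarith
  next
    case False
    then have cT1: "card T1 = q" using T1(2) by simp
    define E where "E = Ed B T1"
    define U where "U = NU B T1 T2"
    define C' where "C' = {v \<in> B - U. real (card (nb B T1 v - U)) < D}"
    have C: "Cont q th D B T1 T2 = T2 \<union> C'" using False by (simp add: Cont_def C'_def U_def)
    have C'B: "C' \<subseteq> B" by (auto simp: C'_def)
    have fC': "finite C'" using C'B fB finite_subset by blast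
    have EB: "E \<subseteq> B \<times> B" unfolding E_def by (rule Ed_sub)
    have "real q * th = (\<Sum>t\<in>T1. th)" using cT1 by simp
    also have "\<dots> \<le> (\<Sum>t\<in>T1. real (dg B t))"
      by (rule sum_mono) (use T1(1) in \<open>auto simp: Xs_def th_def\<close>)
    also have "\<dots> = real (card E)" unfolding E_def using card_Ed[OF BG T1B] by simp
    finally have Elow: "real q * th \<le> real (card E)" .
    define E1 where "E1 = Sigma (B - C') (\<lambda>x. {y. (x,y) \<in> E})"
    define E2' where "E2' = Sigma (B - C') (\<lambda>y. {x. (x,y) \<in> E})"
    define E3 where "E3 = Sigma C' (\<lambda>x. nb B T1 x - U)"
    have fout: "finite {y. (x,y) \<in> E}" for x
      by (rule finite_subset[OF _ fB]) (use EB in auto)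
    have fin: "finite {x. (x,y) \<in> E}" for y
      by (rule finite_subset[OF _ fB]) (use EB in auto)
    have fnb: "finite (nb B T1 x - U)" for x
      by (rule finite_subset[OF _ fB]) (use nb_sub in blast)
    have Esub: "E \<subseteq> E1 \<union> ((\<lambda>(y,x). (x,y)) ` E2') \<union> E3"
    proof
      fix p assume pE: "p \<in> E"
      obtain x y where p: "p = (x,y)" by fastforce
      have xy: "x \<in> B" "y \<in> B" using pE p EB by auto
      show "p \<in> E1 \<union> ((\<lambda>(y,x). (x,y)) ` E2') \<union> E3"
      proof (cases "x \<in> C'")
        case False then show ?thesis using xy pE p by (auto simp: E1_def)
      next
        case xC: True
        show ?thesis
        proof (cases "y \<in> C'")
          case False
          then have "(y,x) \<in> E2'" using xy pE p by (auto simp: E2'_def)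
          then show ?thesis using p by (auto intro!: image_eqI[of _ _ "(y,x)"])
        next
          case True
          then have "y \<in> nb B T1 x - U" using pE p by (auto simp: C'_def nb_def E_def)
          then show ?thesis using xC p by (auto simp: E3_def)
        qed
      qed
    qed
    have fE1: "finite E1" unfolding E1_def using fB fout by auto
    have fE2: "finite E2'" unfolding E2'_def using fB fin by auto
    have fE3: "finite E3" unfolding E3_def using fC' fnb by auto
    have "card E \<le> card (E1 \<union> ((\<lambda>(y,x). (x,y)) ` E2') \<union> E3)"
      using Esub fE1 fE2 fE3 by (intro card_mono) auto
    also have "\<dots> \<le> card E1 + card ((\<lambda>(y,x). (x,y)) ` E2') + card E3"
    proof -
      have "card (E1 \<union> ((\<lambda>(y,x). (x,y)) ` E2') \<union> E3) \<le> card (E1 \<union> ((\<lambda>(y,x). (x,y)) ` E2')) + card E3"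
        by (rule card_Un_le)
      moreover have "card (E1 \<union> ((\<lambda>(y,x). (x,y)) ` E2')) \<le> card E1 + card ((\<lambda>(y,x). (x,y)) ` E2')"
        by (rule card_Un_le)
      ultimately show ?thesis by linarith
    qed
    also have "card ((\<lambda>(y,x). (x,y)) ` E2') \<le> card E2'" by (rule card_image_le[OF fE2])
    finally have Eup0: "card E \<le> card E1 + card E2' + card E3" by simp
    have "card E1 = (\<Sum>x\<in>B - C'. card {y. (x,y) \<in> E})" unfolding E1_def
      using fB fout by simp
    also have "\<dots> \<le> (\<Sum>x\<in>B - C'. q)"
      by (rule sum_mono) (use outdeg[OF fT1] cT1 in \<open>simp add: E_def\<close>)
    finally have cE1: "card E1 \<le> card (B - C') * q" by simp
    have "card E2' = (\<Sum>y\<in>B - C'. card {x. (x,y) \<in> E})" unfolding E2'_def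
      using fB fin by simp
    also have "\<dots> \<le> (\<Sum>y\<in>B - C'. q)"
      by (rule sum_mono) (use indeg[OF BG T1B] cT1 in \<open>simp add: E_def\<close>)
    finally have cE2: "card E2' \<le> card (B - C') * q" by simp
    have "real (card E3) = (\<Sum>x\<in>C'. real (card (nb B T1 x - U)))" unfolding E3_def
      using fC' fnb by simp
    also have "\<dots> \<le> (\<Sum>x\<in>C'. D)"
      by (rule sum_mono) (auto simp: C'_def)
    also have "\<dots> = real (card C') * D" by simp
    also have "\<dots> \<le> N * D" using card_mono[OF fB C'B] BN D0
      by (intro mult_right_mono) auto
    finally have cE3: "real (card E3) \<le> N * D" .
    have cBC: "real (card (B - C')) = real (card B) - real (card C')"
      using card_Diff_subset[OF fC' C'B] card_mono[OF fB C'B] by simp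
    define a where "a = real (card B) - real (card C')"
    have "real q * th \<le> 2 * real q * a + N * D"
    proof -
      have "real (card E) \<le> real (card E1) + real (card E2') + real (card E3)" using Eup0 by linarith
      moreover have "real (card E1) \<le> real (card (B - C')) * real q"
        using of_nat_mono[OF cE1, where 'a=real] by simp
      moreover have "real (card E2') \<le> real (card (B - C')) * real q"
        using of_nat_mono[OF cE2, where 'a=real] by simp
      ultimately show ?thesis using Elow cE3 cBC unfolding a_def by (simp add: algebra_simps)
    qed
    then have "real q * (\<epsilon>*N/2) \<le> real q * (2 * a + \<epsilon>*N/8)"
      unfolding th_def D_def by (simp add: algebra_simps)
    then have "\<epsilon>*N/2 \<le> 2 * a + \<epsilon>*N/8" using q0 by (simp add: mult_le_cancel_left_pos)
    then have abig: "3*\<epsilon>*N/16 \<le> a" by linarith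
    have qe: "128 \<le> real q * \<epsilon>^2" using qlo eps by (simp add: field_simps)
    have "N / D \<le> \<epsilon>*N/16"
    proof -
      have "N * 128 \<le> N * (real q * \<epsilon>^2)" using mult_left_mono[OF qe N0] .
      then have "N \<le> \<epsilon>*N/16 * D" unfolding D_def by (simp add: power2_eq_square algebra_simps)
      then show ?thesis using D0 by (simp add: divide_le_eq)
    qed
    then have mle: "real m \<le> \<epsilon>*N/16" using mD unfolding D_def by linarith
    have "card (Cont q th D B T1 T2) \<le> card T2 + card C'" unfolding C by (rule card_Un_le)
    then have "real (card (Cont q th D B T1 T2)) \<le> real m + real (card C')" using T2(2) by linarith
    then show ?thesis using mle abig unfolding a_def th_def D_def by linarith
  qed
qed




definition stp :: "nat \<Rightarrow> nat \<Rightarrow> real \<Rightarrow> real \<Rightarrow> int list set \<Rightarrow> int list set set" where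
  "stp q m th D B = {Cont q th D B T1 T2 | T1 T2. T1 \<subseteq> Xs th B \<and> card T1 \<le> q \<and> T2 \<subseteq> B \<and> card T2 \<le> m}"

lemma small_sets:
  assumes fG: "finite G"
  shows "finite {T. T \<subseteq> G \<and> card T \<le> k} \<and> card {T. T \<subseteq> G \<and> card T \<le> k} \<le> (k+1) * (card G + 1) ^ k"
proof -
  let ?L = "{xs. set xs \<subseteq> G \<and> length xs \<le> k}"
  have sub: "{T. T \<subseteq> G \<and> card T \<le> k} \<subseteq> set ` ?L"
  proof
    fix T assume T: "T \<in> {T. T \<subseteq> G \<and> card T \<le> k}"
    then have "finite T" using fG finite_subset by blast
    then obtain xs where "set xs = T" "distinct xs" using finite_distinct_list by blast
    then have "length xs = card T" using distinct_card by metis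
    then have "xs \<in> ?L" using T \<open>set xs = T\<close> by auto
    then show "T \<in> set ` ?L" using \<open>set xs = T\<close> by (intro rev_image_eqI[of xs]) auto
  qed
  have fL: "finite ?L" using finite_lists_length_le[OF fG] .
  have "card {T. T \<subseteq> G \<and> card T \<le> k} \<le> card (set ` ?L)" using sub fL by (intro card_mono) auto
  also have "\<dots> \<le> card ?L" using fL by (rule card_image_le)
  also have "\<dots> = (\<Sum>i\<le>k. card G ^ i)" using card_lists_length_le[OF fG] .
  also have "\<dots> \<le> (\<Sum>i\<le>k. (card G + 1) ^ k)"
  proof (rule sum_mono)
    fix i assume "i \<in> {..k}"
    then have "i \<le> k" by simp
    have "card G ^ i \<le> (card G + 1) ^ i" by (rule power_mono) auto
    also have "\<dots> \<le> (card G + 1) ^ k" using \<open>i \<le> k\<close> by (rule power_increasing) simp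
    finally show "card G ^ i \<le> (card G + 1) ^ k" .
  qed
  also have "\<dots> = (k+1) * (card G + 1) ^ k" by simp
  finally have c: "card {T. T \<subseteq> G \<and> card T \<le> k} \<le> (k+1) * (card G + 1) ^ k" .
  have "finite {T. T \<subseteq> G \<and> card T \<le> k}" by (rule finite_subset[OF sub finite_imageI[OF fL]])
  then show ?thesis using c by blast
qed

lemma stp_card:
  assumes fG: "finite G" and BG: "B \<subseteq> G"
  shows "finite (stp q m th D B) \<and> card (stp q m th D B) \<le> ((max q m + 1) * (card G + 1) ^ max q m)^2"
proof -
  let ?S = "{T. T \<subseteq> G \<and> card T \<le> max q m}"
  have S: "finite ?S" "card ?S \<le> (max q m + 1) * (card G + 1) ^ max q m" using small_sets[OF fG] by auto
  have sub: "stp q m th D B \<subseteq> (\<lambda>(T1,T2). Cont q th D B T1 T2) ` (?S \<times> ?S)"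
  proof
    fix C assume "C \<in> stp q m th D B"
    then obtain T1 T2 where T: "C = Cont q th D B T1 T2" "T1 \<subseteq> Xs th B" "card T1 \<le> q" "T2 \<subseteq> B" "card T2 \<le> m"
      unfolding stp_def by auto
    have "T1 \<subseteq> G" using T(2) Xs_sub[of th B] BG by (meson order_trans)
    moreover have "T2 \<subseteq> G" using T(4) BG by blast
    ultimately have "(T1,T2) \<in> ?S \<times> ?S" using T(3,5) by auto
    then show "C \<in> (\<lambda>(T1,T2). Cont q th D B T1 T2) ` (?S \<times> ?S)" using T(1) by (intro rev_image_eqI[of "(T1,T2)"]) auto
  qed
  have fSS: "finite (?S \<times> ?S)" using S(1) by simp
  have "card (stp q m th D B) \<le> card ((\<lambda>(T1,T2). Cont q th D B T1 T2) ` (?S \<times> ?S))"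
    using sub fSS by (intro card_mono) auto
  also have "\<dots> \<le> card (?S \<times> ?S)" using fSS by (rule card_image_le)
  also have "\<dots> = card ?S * card ?S" by (simp add: card_cartesian_product)
  also have "\<dots> \<le> ((max q m + 1) * (card G + 1) ^ max q m) * ((max q m + 1) * (card G + 1) ^ max q m)"
    using mult_le_mono[OF S(2) S(2)] .
  finally have c: "card (stp q m th D B) \<le> ((max q m + 1) * (card G + 1) ^ max q m)^2"
    by (simp add: power2_eq_square)
  have "finite (stp q m th D B)" by (rule finite_subset[OF sub finite_imageI[OF fSS]])
  then show ?thesis using c by blast
qed

lemma stp_sub:
  assumes "B' \<in> stp q m th D B" shows "B' \<subseteq> B"
proof -
  obtain T1 T2 where T: "B' = Cont q th D B T1 T2" "T1 \<subseteq> Xs th B" "T2 \<subseteq> B"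
    using assms unfolding stp_def by auto
  have "T1 \<subseteq> B" using T(2) Xs_sub by (rule order_trans)
  then show ?thesis unfolding T(1) using T(3) by (rule Cont_sub)
qed


lemma asym1: "((\<lambda>x::real. sqrt x * log 2 (x + 1) / x) \<longlongrightarrow> 0) at_top"
  by real_asymp

lemma log_bound:
  fixes c0 s :: real
  assumes c1: "card C \<ge> 1" and cC: "card C \<le> (((mm+1)*(G+1)^mm)^2)^R" and G1: "G \<ge> 1"
    and mm: "real mm + 1 \<le> c0 * s"
  shows "log 2 (real (card C)) \<le> 4 * real R * c0 * (s * log 2 (real G + 1))"
proof -
  have "mm + 1 \<le> 2^(mm+1)" using less_exp[of "mm+1"] by linarith
  also have "(2::nat)^(mm+1) \<le> (G+1)^(mm+1)" using G1 by (intro power_mono) auto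
  finally have h: "mm + 1 \<le> (G+1)^(mm+1)" .
  have "(mm+1)*(G+1)^mm \<le> (G+1)^(mm+1) * (G+1)^mm" by (rule mult_le_mono1[OF h])
  also have "\<dots> = (G+1)^(2*mm+1)"
  proof -
    have e: "2*mm+1 = (mm+1)+mm" by simp
    show ?thesis unfolding e by (simp only: power_add)
  qed
  finally have "(((mm+1)*(G+1)^mm)^2)^R \<le> (((G+1)^(2*mm+1))^2)^R" by (intro power_mono) auto
  also have "\<dots> = (G+1)^((2*mm+1)*2*R)" by (simp only: power_mult)
  finally have cC2: "card C \<le> (G+1)^((2*mm+1)*2*R)" using cC by linarith
  have r: "real (card C) \<le> real ((G+1)^((2*mm+1)*2*R))" using cC2 by (rule of_nat_mono)
  have c0': "0 < real (card C)" using c1 by simp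
  have "log 2 (real (card C)) \<le> log 2 (real ((G+1)^((2*mm+1)*2*R)))"
    by (rule log_mono[OF _ c0' r]) simp
  also have "\<dots> = real ((2*mm+1)*2*R) * log 2 (real G + 1)"
    by (simp add: log_nat_power add.commute)
  also have "\<dots> \<le> real (4 * (mm+1) * R) * log 2 (real G + 1)"
  proof (rule mult_right_mono)
    have "(2*mm+1)*2*R \<le> 4*(mm+1)*R" by (intro mult_le_mono1) simp
    then show "real ((2*mm+1)*2*R) \<le> real (4*(mm+1)*R)" by (rule of_nat_mono)
    show "0 \<le> log 2 (real G + 1)" using G1 by simp
  qed
  also have "\<dots> = 4 * real R * ((real mm + 1) * log 2 (real G + 1))" by (simp add: algebra_simps)
  also have "\<dots> \<le> 4 * real R * ((c0 * s) * log 2 (real G + 1))"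
    using mm G1 by (intro mult_left_mono mult_right_mono) auto
  finally show ?thesis by (simp add: algebra_simps)
qed

theorem mainTheorem5:
  fixes d :: nat and \<epsilon> :: real
  assumes "d \<ge> 1" and "0 < \<epsilon>" and "\<epsilon> < 1"
  shows "\<exists>(n0::nat) (C :: nat \<Rightarrow> int list set set).
           (\<forall>n\<ge>n0.
              C n \<subseteq> Pow (grid n d) \<and>
              (\<forall>A. A \<subseteq> grid n d \<and> sum_free A \<longrightarrow> (\<exists>B\<in>C n. A \<subseteq> B)) \<and>
              (\<forall>B\<in>C n. real (card (schur_triples B)) \<le> \<epsilon> * real n ^ (2 * d))) \<and>
           (\<lambda>n. log 2 (real (card (C n)))) \<in> o(\<lambda>n. real n ^ d)"
proof -
  have d1: "d \<ge> 1" and eps: "\<epsilon> > 0" using assms by auto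
  define N :: "nat \<Rightarrow> real" where "N = (\<lambda>n. real n ^ d)"
  define s where "s = (\<lambda>n. sqrt (N n))"
  define q where "q = (\<lambda>n. nat \<lceil>s n\<rceil>)"
  define D where "D = (\<lambda>n. real (q n) * \<epsilon> / 8)"
  define m where "m = (\<lambda>n. nat \<lfloor>N n / D n\<rfloor>)"
  define th where "th = (\<lambda>n. \<epsilon> * N n / 2)"
  define R where "R = nat \<lceil>8/\<epsilon>\<rceil> + 1"
  define gd where "gd = (\<lambda>n B. real (card (PP B)) \<le> \<epsilon> * (N n)^2)"
  define st where "st = (\<lambda>n. stp (q n) (m n) (th n) (D n))"
  define C where "C = (\<lambda>n. fam (gd n) (st n) (grid n d) R)"
  define K0 where "K0 = 128/\<epsilon>^2 + 16/(3*\<epsilon>) + 1"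
  define n0 where "n0 = nat \<lceil>K0^2\<rceil>"
  have fG: "finite (grid n d)" for n by (rule finite_grid)
  have cG: "real (card (grid n d)) = N n" for n by (simp add: card_grid N_def)
  have sub: "B' \<subseteq> B" if "B \<subseteq> grid n d" "B' \<in> st n B" for n B B'
    using that(2) unfolding st_def by (rule stp_sub)
  have N1: "N n \<ge> 1" if "n \<ge> 1" for n unfolding N_def using that by simp
  have s1: "s n \<ge> 1" if "n \<ge> 1" for n unfolding s_def using N1[OF that] by simp
  have ssq: "s n ^ 2 = N n" for n unfolding s_def N_def by simp
  have qs: "s n \<le> real (q n)" for n unfolding q_def by (rule real_nat_ceiling_ge)
  have qs2: "real (q n) \<le> s n + 1" if "n \<ge> 1" for n
  proof -
    have "real (q n) = real_of_int \<lceil>s n\<rceil>" unfolding q_def using s1[OF that] by simp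
    also have "\<dots> \<le> s n + 1" by simp
    finally show ?thesis .
  qed
  have q0: "q n > 0" if "n \<ge> 1" for n using qs[of n] s1[OF that] by simp
  have D0: "D n > 0" if "n \<ge> 1" for n unfolding D_def using q0[OF that] eps by simp
  have mND: "real (m n) \<le> N n / D n" if "n \<ge> 1" for n
  proof -
    have "N n / D n \<ge> 0" using N1[OF that] D0[OF that] by simp
    then show ?thesis unfolding m_def by simp
  qed
  have mk: "k \<le> m n" if "n \<ge> 1" "real k * D n \<le> real (card B)" "B \<subseteq> grid n d" for n k B
  proof -
    have "card B \<le> card (grid n d)" by (rule card_mono[OF fG that(3)])
    then have "real (card B) \<le> real (card (grid n d))" by (rule of_nat_mono)
    then have "real (card B) \<le> N n" using cG[of n] by simp
    then have "real k * D n \<le> N n" using that(2) by linarith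
    then have "real k \<le> N n / D n" using D0[OF that(1)] by (simp add: le_divide_eq)
    then have "int k \<le> \<lfloor>N n / D n\<rfloor>" by (simp add: le_floor_iff)
    then show ?thesis unfolding m_def by linarith
  qed
  have covstep: "\<exists>B'\<in>st n B. A \<subseteq> B'" if h1: "n \<ge> 1" and h2: "B \<subseteq> grid n d"
    and h3: "A \<subseteq> B" and h4: "sum_free A" for n B A
  proof -
    have ex: "\<exists>T1 T2. T1 \<subseteq> Xs (th n) B \<and> card T1 \<le> q n \<and> T2 \<subseteq> B \<and> card T2 \<le> m n \<and>
        A \<subseteq> Cont (q n) (th n) (D n) B T1 T2"
      by (rule cover[OF h2 h3 h4 q0[OF h1] D0[OF h1] mk[OF h1 _ h2]])
    then obtain T1 T2 where T: "T1 \<subseteq> Xs (th n) B" "card T1 \<le> q n" "T2 \<subseteq> B" "card T2 \<le> m n"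
        "A \<subseteq> Cont (q n) (th n) (D n) B T1 T2" by blast
    then show ?thesis unfolding st_def stp_def by blast
  qed
  have cover_all: "\<exists>B\<in>C n. A \<subseteq> B" if n1: "n \<ge> 1" and AG: "A \<subseteq> grid n d" and sA: "sum_free A" for n A
  proof -
    have "\<exists>B\<in>fam (gd n) (st n) (grid n d) R. A \<subseteq> B"
    proof (rule fam_cover[where Q=sum_free and G="grid n d" and st="st n" and g="gd n", OF sub[where n=n] _ AG sA])
      fix B A' assume a: "B \<subseteq> grid n d" "A' \<subseteq> B" "sum_free A'"
      show "\<exists>B'\<in>st n B. A' \<subseteq> B'" by (rule covstep[OF n1 a])
    qed
    then show ?thesis unfolding C_def .
  qed
  have Csub: "B \<subseteq> grid n d" if "B \<in> C n" for n B
  proof -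
    have "B \<in> fam (gd n) (st n) (grid n d) R" using that unfolding C_def .
    have subn: "\<And>B B'. B \<subseteq> grid n d \<Longrightarrow> B' \<in> st n B \<Longrightarrow> B' \<subseteq> B" by (rule sub)
    show ?thesis by (rule fam_sub[OF subn \<open>B \<in> fam (gd n) (st n) (grid n d) R\<close>])
  qed
  have Ccard: "finite (C n) \<and> card (C n) \<le> (((max (q n) (m n) + 1) * (card (grid n d) + 1) ^ max (q n) (m n))^2)^R" for n
    unfolding C_def
  proof (rule fam_card[where G="grid n d" and st="st n", OF sub[where n=n]])
    show "finite (st n B) \<and> card (st n B) \<le> ((max (q n) (m n) + 1) * (card (grid n d) + 1) ^ max (q n) (m n))^2"
      if "B \<subseteq> grid n d" for B
      unfolding st_def using stp_card[OF fG that] by blast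
    have p: "0 < (max (q n) (m n) + 1) * (card (grid n d) + 1) ^ max (q n) (m n)" by simp
    show "1 \<le> ((max (q n) (m n) + 1) * (card (grid n d) + 1) ^ max (q n) (m n))^2"
      using zero_less_power[OF p, of 2] by linarith
  qed
  have K0pos: "K0 \<ge> 1" unfolding K0_def using eps by simp
  have K02: "K0^2 \<ge> 1" using K0pos by (simp add: one_le_power)
  have n0K: "real n0 \<ge> K0^2" unfolding n0_def by (rule real_nat_ceiling_ge)
  have n0pos: "n0 \<ge> 1"
  proof -
    have "real n0 \<ge> 1" using K02 n0K by linarith
    then show ?thesis by simp
  qed
  have sK0: "s n \<ge> K0" if "n \<ge> n0" for n
  proof -
    have "real n \<ge> real n0" using that by simp
    then have "real n \<ge> K0^2" using n0K by linarith
    moreover have "N n \<ge> real n"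
    proof -
      have "real n \<ge> 1" using that n0pos by simp
      then have "real n ^ 1 \<le> real n ^ d" using d1 by (intro power_increasing) auto
      then show ?thesis unfolding N_def by simp
    qed
    ultimately have "K0^2 \<le> N n" by linarith
    then have "sqrt (K0^2) \<le> sqrt (N n)" by (rule real_sqrt_le_mono)
    then show ?thesis unfolding s_def using K0pos by simp
  qed
  have good: "gd n B" if "n \<ge> n0" "B \<in> C n" for n B
  proof -
    have n1: "n \<ge> 1" using that n0pos by linarith
    have t1: "128/\<epsilon>^2 \<ge> 0" "16/(3*\<epsilon>) \<ge> 0" using eps by auto
    have qlo: "128/\<epsilon>^2 \<le> real (q n)" using sK0[OF that(1)] qs[of n] t1 unfolding K0_def by linarith
    have s3: "16/(3*\<epsilon>) \<le> s n" using sK0[OF that(1)] t1 unfolding K0_def by linarith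
    have "2 * s n \<le> 3*\<epsilon>*N n/8"
    proof -
      have "16 \<le> 3*\<epsilon>*s n" using s3 eps by (simp add: field_simps)
      then have "16 * s n \<le> 3*\<epsilon>*s n * s n" using s1[OF n1] by (intro mult_right_mono) auto
      moreover have "3*\<epsilon>*s n * s n = 3*\<epsilon>*N n" using ssq[of n] by (simp add: power2_eq_square mult.assoc)
      ultimately show ?thesis by linarith
    qed
    then have qup: "real (q n) \<le> 3*\<epsilon>*N n/8" using qs2[OF n1] s1[OF n1] by linarith
    have shr: "real (card B') + \<epsilon> * N n / 8 \<le> real (card B0)"
      if a1: "B0 \<subseteq> grid n d" and a2: "\<not> gd n B0" and a3: "B' \<in> st n B0" for B0 B'
    proof -
      obtain T1 T2 where T: "B' = Cont (q n) (th n) (D n) B0 T1 T2" "T1 \<subseteq> Xs (th n) B0" "card T1 \<le> q n"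
          "T2 \<subseteq> B0" "card T2 \<le> m n"
        using a3 unfolding st_def stp_def by blast
      have big: "\<epsilon> * (N n)^2 < real (card (PP B0))" using a2 unfolding gd_def by simp
      have mD': "real (m n) \<le> N n / (real (q n) * \<epsilon> / 8)" using mND[OF n1] unfolding D_def .
      show ?thesis
        using shrink[OF a1 cG[symmetric] eps big q0[OF n1] qup qlo mD' T(2)[unfolded th_def] T(3) T(4) T(5)]
        unfolding T(1) th_def D_def by simp
    qed
    have "gd n B \<or> real (card B) + real R * (\<epsilon> * N n / 8) \<le> real (card (grid n d))"
      using fam_shrink[where G="grid n d" and st="st n" and g="gd n", OF sub[where n=n] shr] that(2) unfolding C_def by blast
    moreover have "real R * (\<epsilon> * N n / 8) > N n"
    proof -
      have "real R \<ge> 8/\<epsilon> + 1" unfolding R_def by (simp add: real_nat_ceiling_ge)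
      then have "real R * \<epsilon> \<ge> (8/\<epsilon> + 1) * \<epsilon>" using eps by (intro mult_right_mono) auto
      moreover have "(8/\<epsilon> + 1) * \<epsilon> = 8 + \<epsilon>" using eps by (simp add: field_simps)
      ultimately have "real R * \<epsilon> \<ge> 8 + \<epsilon>" by linarith
      then have "real R * \<epsilon> > 8" using eps by linarith
      then have "real R * \<epsilon> * N n > 8 * N n" using N1[OF n1] by (intro mult_strict_right_mono) auto
      then show ?thesis by (simp add: algebra_simps)
    qed
    moreover have "real (card B) \<ge> 0" by simp
    ultimately show ?thesis using cG[of n] by linarith
  qed
  have part1: "\<forall>n\<ge>n0.
              C n \<subseteq> Pow (grid n d) \<and>
              (\<forall>A. A \<subseteq> grid n d \<and> sum_free A \<longrightarrow> (\<exists>B\<in>C n. A \<subseteq> B)) \<and>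
              (\<forall>B\<in>C n. real (card (schur_triples B)) \<le> \<epsilon> * real n ^ (2 * d))"
  proof (intro allI impI)
    fix n assume n: "n \<ge> n0"
    have n1: "n \<ge> 1" using n n0pos by linarith
    have c1: "C n \<subseteq> Pow (grid n d)" using Csub by blast
    have c2: "\<forall>A. A \<subseteq> grid n d \<and> sum_free A \<longrightarrow> (\<exists>B\<in>C n. A \<subseteq> B)" using cover_all[OF n1] by blast
    have c3: "real (card (schur_triples B)) \<le> \<epsilon> * real n ^ (2 * d)" if B: "B \<in> C n" for B
    proof -
      have fB: "finite B" using Csub[OF B] fG finite_subset by blast
      have "real (card (schur_triples B)) \<le> real (card (PP B))" using schur_le_PP[OF fB] by simp
      also have "\<dots> \<le> \<epsilon> * (N n)^2" using good[OF n B] unfolding gd_def by simp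
      also have "\<dots> = \<epsilon> * real n ^ (2 * d)" unfolding N_def by (simp add: power_mult[symmetric] mult.commute)
      finally show ?thesis .
    qed
    show "C n \<subseteq> Pow (grid n d) \<and>
              (\<forall>A. A \<subseteq> grid n d \<and> sum_free A \<longrightarrow> (\<exists>B\<in>C n. A \<subseteq> B)) \<and>
              (\<forall>B\<in>C n. real (card (schur_triples B)) \<le> \<epsilon> * real n ^ (2 * d))"
      using c1 c2 c3 by blast
  qed
  define c0 where "c0 = 3 + 8/\<epsilon>"
  define g where "g = (\<lambda>n. s n * log 2 (N n + 1))"
  have bound: "log 2 (real (card (C n))) \<le> 4 * real R * c0 * g n" if n1: "n \<ge> 1" for n
  proof -
    let ?mm = "max (q n) (m n)"
    have ne: "C n \<noteq> {}" using cover_all[OF n1, of "{}"] by (auto simp: sum_free_def)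
    have c1: "card (C n) \<ge> 1" using Ccard[of n] ne by (simp add: Suc_le_eq card_gt_0_iff)
    have G1: "card (grid n d) \<ge> 1" using cG[of n] N1[OF n1] by linarith
    have "N n / D n \<le> 8 / \<epsilon> * s n"
    proof -
      have "N n / D n = 8 * N n / (real (q n) * \<epsilon>)" unfolding D_def by (simp add: field_simps)
      also have "\<dots> \<le> 8 * N n / (s n * \<epsilon>)"
        using qs[of n] s1[OF n1] eps N1[OF n1] by (intro divide_left_mono mult_right_mono mult_pos_pos) auto
      also have "\<dots> = 8 / \<epsilon> * s n" using ssq[of n] s1[OF n1] eps by (simp add: power2_eq_square field_simps)
      finally show ?thesis .
    qed
    then have "real (m n) \<le> 8 / \<epsilon> * s n" using mND[OF n1] by linarith
    then have "real ?mm + 1 \<le> s n + 2 + 8 / \<epsilon> * s n" using qs2[OF n1] by (simp add: max_def)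
    also have "\<dots> \<le> c0 * s n" unfolding c0_def using s1[OF n1] by (simp add: algebra_simps)
    finally have mm: "real ?mm + 1 \<le> c0 * s n" .
    show ?thesis using log_bound[OF c1 conjunct2[OF Ccard[of n]] G1 mm] cG[of n] unfolding g_def by simp
  qed
  have nonneg: "log 2 (real (card (C n))) \<ge> 0" if "n \<ge> 1" for n
  proof -
    have ne: "C n \<noteq> {}" using cover_all[OF that, of "{}"] by (auto simp: sum_free_def)
    have "card (C n) \<ge> 1" using Ccard[of n] ne by (simp add: Suc_le_eq card_gt_0_iff)
    then show ?thesis by simp
  qed
  have g0: "g n \<ge> 0" if "n \<ge> 1" for n unfolding g_def using s1[OF that] N1[OF that] by simp
  have bigO: "(\<lambda>n. log 2 (real (card (C n)))) \<in> O(g)"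
  proof (rule bigoI[where c="4 * real R * c0"])
    show "\<forall>\<^sub>F n in at_top. norm (log 2 (real (card (C n)))) \<le> 4 * real R * c0 * norm (g n)"
      using eventually_ge_at_top[of "1::nat"]
    proof eventually_elim
      case (elim n)
      then show ?case using bound[OF elim] nonneg[OF elim] g0[OF elim] by simp
    qed
  qed
  have Nlim: "filterlim N at_top at_top"
    unfolding N_def using d1 by (intro filterlim_pow_at_top filterlim_real_sequentially) auto
  have lim: "((\<lambda>n. g n / N n) \<longlongrightarrow> 0) at_top"
  proof -
    have "((\<lambda>n. (\<lambda>x. sqrt x * log 2 (x + 1) / x) (N n)) \<longlongrightarrow> 0) at_top"
      by (rule filterlim_compose[OF asym1 Nlim])
    then show ?thesis unfolding g_def s_def by simp
  qed
  have smallo: "g \<in> o(N)"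
  proof (rule smalloI_tendsto[OF lim])
    show "\<forall>\<^sub>F n in at_top. N n \<noteq> 0"
      using eventually_ge_at_top[of "1::nat"] by eventually_elim (use N1 in force)
  qed
  have part2: "(\<lambda>n. log 2 (real (card (C n)))) \<in> o(\<lambda>n. real n ^ d)"
    using landau_o.big_small_trans[OF bigO smallo] unfolding N_def .
  show ?thesis using part1 part2 by blast
qed

end
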